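(* Let $0<L<\infty$ and let $(T_f,T_s)$ be the unique solution on $[0,L]$ of the boundary value problem $$-\varphi\kappa_fT_f''+c_{p,f}\frac{\dot m_c}{A_c}T_f'=h_v(T_s-T_f),\qquad (1-\varphi)\kappa_sT_s''=h_v(T_s-T_f)\quad\text{on }(0,L),$$ $$T_f(0)=T_s(0)=T_b,\quad (1-\varphi)\kappa_sT_s'(L)=q_{HG}-c_{p,f}\frac{\dot m_c}{A_c}(T_s(L)-T_f(L)),\quad T_f'(L)=\frac{h_vA_c}{c_{p,f}\dot m_c}(T_s(L)-T_f(L)).$$ Then $T_s(y)\ge T_f(y)$ for all $y\in[0,L]$, and the two temperatures coincide if and only if $\gamma:=\frac{q_{HG}}{(1-\varphi)\kappa_s}=0$.
   Context: Parameters: $\varphi\in(0,1)$, $\kappa_f,\kappa_s,h_v,c_{p,f},\dot m_c,A_c>0$, $T_b\in\mathbb R$, $q_{HG}\ge 0$ (the heat flux from the hot gas; the paper's sign analysis treats the case $q_{HG}\ge0$). *)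

theory Defs
  imports Complex_Main
begin

end

theory Submission
  imports Defs "HOL-Analysis.Analysis"
begin

lemma endpt:
  fixes f f' :: "real \<Rightarrow> real" and L :: real
  assumes L: "0 < L" and cf: "continuous_on {0..L} f"
    and df: "\<And>x. 0 < x \<Longrightarrow> x < L \<Longrightarrow> DERIV f x :> f' x"
    and cf': "continuous_on {0..L} f'"
    and mn: "\<And>x. x \<in> {0..L} \<Longrightarrow> f L \<le> f x"
  shows "f' L \<le> 0"
proof (rule ccontr)
  assume "\<not> f' L \<le> 0"
  hence pos: "f' L > 0" by simp
  from cf' L pos obtain d where d: "d > 0" and
    hd: "\<And>x. x \<in> {0..L} \<Longrightarrow> dist x L < d \<Longrightarrow> dist (f' x) (f' L) < f' L"
    unfolding continuous_on_iff by (metis atLeastAtMost_iff less_eq_real_def)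
  define x1 where "x1 = L - min d L / 2"
  have x1: "0 < x1" "x1 < L" "L - x1 < d" using d L by (auto simp: x1_def min_def)
  have "continuous_on {x1..L} f" using x1 by (intro continuous_on_subset[OF cf]) auto
  from MVT[OF x1(2) this] obtain l z where z: "x1 < z" "z < L" "DERIV f z :> l" "f L - f x1 = (L - x1) * l"
    using df x1 real_differentiable_def by (metis less_trans)
  have "l = f' z" using DERIV_unique[OF z(3) df[of z]] z x1 by simp
  moreover have "dist (f' z) (f' L) < f' L" using hd[of z] z x1 by (simp add: dist_real_def)
  ultimately have "l > 0" by (simp add: dist_real_def abs_if split: if_splits)
  hence "f L > f x1" using z(4) x1 by (smt (verit) mult_pos_pos)
  with mn[of x1] x1 show False by simp
qed

lemma intmin:
  fixes f f' :: "real \<Rightarrow> real" and L x0 l :: real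
  assumes x0: "0 < x0" "x0 < L"
    and df: "\<And>x. 0 < x \<Longrightarrow> x < L \<Longrightarrow> DERIV f x :> f' x"
    and dd: "DERIV f' x0 :> l" and l: "l < 0"
    and mn: "\<And>x. x \<in> {0..L} \<Longrightarrow> f x0 \<le> f x"
  shows False
proof -
  have "f' x0 = 0"
  proof (rule DERIV_local_min[OF df[OF x0]])
    show "0 < min x0 (L - x0)" using x0 by simp
    show "\<forall>y. \<bar>x0 - y\<bar> < min x0 (L - x0) \<longrightarrow> f x0 \<le> f y" using mn by (simp add: abs_less_iff)
  qed
  from DERIV_neg_dec_right[OF dd l] obtain d where d: "d > 0"
    and hd: "\<And>h. h > 0 \<Longrightarrow> h < d \<Longrightarrow> f' (x0 + h) < f' x0" by blast
  define h where "h = min d (L - x0) / 2"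
  have h: "h > 0" "h < d" "x0 + h < L" using d x0 by (auto simp: h_def min_def field_simps)
  have "continuous_on {x0..x0+h} f"
    using x0 h by (intro continuous_at_imp_continuous_on ballI DERIV_isCont[OF df]) auto
  from MVT[OF _ this] obtain l' z where z: "x0 < z" "z < x0 + h" "DERIV f z :> l'" "f (x0+h) - f x0 = h * l'"
    using df x0 h real_differentiable_def by (smt (verit))
  have "l' = f' z" using DERIV_unique[OF z(3) df[of z]] z x0 h by simp
  moreover have "f' z < 0" using hd[of "z - x0"] z h \<open>f' x0 = 0\<close> by simp
  ultimately have "f (x0 + h) < f x0" using z(4) h by (smt (verit) mult_pos_neg)
  with mn[of "x0+h"] x0 h show False by simp
qed

lemma core:
  fixes a b c h q L :: real
    and Tf Ts Tf' Ts' Tf'' Ts'' :: "real \<Rightarrow> real"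
  assumes a: "0 < a" and b: "0 < b" and c: "0 < c" and h: "0 < h" and q: "0 \<le> q" and L: "0 < L"
    and dTf: "\<And>y. y \<in> {0..L} \<Longrightarrow> (Tf has_real_derivative Tf' y) (at y within {0..L})"
    and dTs: "\<And>y. y \<in> {0..L} \<Longrightarrow> (Ts has_real_derivative Ts' y) (at y within {0..L})"
    and cTf': "continuous_on {0..L} Tf'"
    and cTs': "continuous_on {0..L} Ts'"
    and ddTf: "\<And>y. y \<in> {0<..<L} \<Longrightarrow> (Tf' has_real_derivative Tf'' y) (at y)"
    and ddTs: "\<And>y. y \<in> {0<..<L} \<Longrightarrow> (Ts' has_real_derivative Ts'' y) (at y)"
    and eqf: "\<And>y. y \<in> {0<..<L} \<Longrightarrow> - a * Tf'' y + c * Tf' y = h * (Ts y - Tf y)"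
    and eqs: "\<And>y. y \<in> {0<..<L} \<Longrightarrow> b * Ts'' y = h * (Ts y - Tf y)"
    and bc0: "Tf 0 = Ts 0"
    and bcLs: "b * Ts' L = q - c * (Ts L - Tf L)"
    and bcLf: "c * Tf' L = h * (Ts L - Tf L)"
  shows "\<forall>y \<in> {0..L}. Tf y \<le> Ts y"
proof (rule ccontr)
  assume "\<not> ?thesis"
  then obtain y1 where y1: "y1 \<in> {0..L}" "Ts y1 - Tf y1 < 0" by force
  define th where "th y = Ts y - Tf y" for y
  define v where "v y = Ts' y - Tf' y" for y
  have dth: "DERIV th y :> v y" if "0 < y" "y < L" for y
  proof -
    have "(th has_real_derivative v y) (at y within {0..L})"
      unfolding th_def v_def using that by (intro derivative_intros dTs dTf) auto
    thus ?thesis using that by (simp add: at_within_Icc_at)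
  qed
  have cth: "continuous_on {0..L} th"
    unfolding th_def by (intro continuous_intros DERIV_continuous_on[OF dTs] DERIV_continuous_on[OF dTf])
  have cv: "continuous_on {0..L} v"
    unfolding v_def by (intro continuous_intros cTs' cTf')
  obtain x0 where x0: "x0 \<in> {0..L}" and mn: "\<And>y. y \<in> {0..L} \<Longrightarrow> th x0 \<le> th y"
    using continuous_attains_inf[OF compact_Icc _ cth] L by auto
  define m where "m = th x0"
  have m: "m < 0" using mn[OF y1(1)] y1(2) unfolding m_def th_def by simp
  have "x0 \<noteq> 0" using m bc0 unfolding m_def th_def by auto
  show False
  proof (cases "x0 = L")
    case True
    have "v L \<le> 0"
      by (rule endpt[OF L cth dth cv]) (use mn True in auto)
    moreover have "v L > 0"
    proof -
      have "b * v L = q - c * th L - b * Tf' L" using bcLs unfolding v_def th_def by (simp add: algebra_simps)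
      also have "b * Tf' L = (b * h / c) * th L"
      proof -
        have "Tf' L = h / c * th L" using bcLf c unfolding th_def by (simp add: field_simps)
        thus ?thesis by simp
      qed
      finally have "b * v L = q - (c + b * h / c) * th L" by (simp add: algebra_simps)
      moreover have "(c + b * h / c) * th L < 0" using True m m_def b c h
        by (intro mult_pos_neg) (auto intro: add_pos_pos)
      ultimately have "b * v L > 0" using q by simp
      thus ?thesis using b by (simp add: zero_less_mult_iff)
    qed
    ultimately show False by simp
  next
    case False
    hence x0i: "0 < x0" "x0 < L" using x0 \<open>x0 \<noteq> 0\<close> by auto
    define w where "w y = exp (- c * y / a) * (Tf' y - h * m / c)" for y
    have "w x0 \<ge> w L"
    proof -
      have "continuous_on {x0..L} w" unfolding w_def
        by (intro continuous_intros continuous_on_subset[OF cTf']) (use x0i a in auto)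
      moreover have dw: "DERIV w y :> exp (- c * y / a) * (h / a) * (m - th y)" if "x0 < y" "y < L" for y
      proof -
        have yi: "y \<in> {0<..<L}" using that x0i by auto
        have "DERIV w y :> (exp (- c * y / a) * (- c / a)) * (Tf' y - h * m / c) + exp (- c * y / a) * Tf'' y"
          unfolding w_def using a by (auto intro!: derivative_eq_intros ddTf yi)
        moreover have "Tf'' y = (c * Tf' y - h * th y) / a" using eqf[OF yi] a unfolding th_def by (simp add: field_simps)
        moreover have "(exp (- c * y / a) * (- c / a)) * (Tf' y - h * m / c) + exp (- c * y / a) * ((c * Tf' y - h * th y) / a)
            = exp (- c * y / a) * (h / a) * (m - th y)" using a c by (simp add: field_simps)
        ultimately show ?thesis by simp
      qed
      ultimately obtain l z where z: "x0 < z" "z < L" "DERIV w z :> l" "w L - w x0 = (L - x0) * l"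
        using MVT[OF x0i(2)] real_differentiable_def by metis
      have "l = exp (- c * z / a) * (h / a) * (m - th z)" using DERIV_unique[OF z(3) dw[OF z(1,2)]] .
      moreover have "m - th z \<le> 0" using mn[of z] z x0i unfolding m_def by auto
      moreover have "exp (- c * z / a) * (h / a) > 0" using a h by simp
      ultimately have "l \<le> 0" using mult_nonneg_nonpos by (metis less_eq_real_def)
      thus ?thesis using z(4) x0i by (smt (verit) mult_pos_neg mult_nonneg_nonpos)
    qed
    moreover have "w L \<ge> 0"
    proof -
      have "Tf' L - h * m / c = (h / c) * (th L - m)" using bcLf c unfolding th_def by (simp add: field_simps)
      moreover have "th L - m \<ge> 0" using mn[of L] L unfolding m_def by auto
      ultimately show ?thesis unfolding w_def using h c by simp
    qed
    ultimately have "w x0 \<ge> 0" by linarith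
    hence "Tf' x0 - h * m / c \<ge> 0" unfolding w_def by (simp add: zero_le_mult_iff)
    hence u: "c * Tf' x0 \<ge> h * m" using c by (simp add: field_simps)
    have x0io: "x0 \<in> {0<..<L}" using x0i by auto
    have ddv: "DERIV v x0 :> Ts'' x0 - Tf'' x0" unfolding v_def
      by (intro derivative_intros ddTs ddTf x0io)
    have "Ts'' x0 - Tf'' x0 < 0"
    proof -
      have e1: "b * Ts'' x0 = h * m" using eqs[OF x0io] unfolding m_def th_def .
      have e2: "a * Tf'' x0 = c * Tf' x0 - h * m" using eqf[OF x0io] unfolding m_def th_def by simp
      have "a * Tf'' x0 \<ge> 0" using e2 u by simp
      hence "Tf'' x0 \<ge> 0" using a by (simp add: zero_le_mult_iff)
      moreover have "Ts'' x0 < 0"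
      proof -
        have "b * Ts'' x0 < 0" using e1 mult_pos_neg[OF h m] by simp
        thus ?thesis using b by (simp add: mult_less_0_iff)
      qed
      ultimately show ?thesis by simp
    qed
    from intmin[OF x0i dth ddv this] mn show False by blast
  qed
qed

theorem lemma3:
  fixes \<phi> \<kappa>f \<kappa>s hv cpf mc Ac Tb qHG L :: real
    and Tf Ts Tf' Ts' Tf'' Ts'' :: "real \<Rightarrow> real"
  assumes phi: "0 < \<phi>" "\<phi> < 1"
    and pos: "0 < \<kappa>f" "0 < \<kappa>s" "0 < hv" "0 < cpf" "0 < mc" "0 < Ac"
    and q: "0 \<le> qHG"
    and L: "0 < L"
    and dTf: "\<And>y. y \<in> {0..L} \<Longrightarrow> (Tf has_real_derivative Tf' y) (at y within {0..L})"
    and dTs: "\<And>y. y \<in> {0..L} \<Longrightarrow> (Ts has_real_derivative Ts' y) (at y within {0..L})"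
    and cTf': "continuous_on {0..L} Tf'"
    and cTs': "continuous_on {0..L} Ts'"
    and ddTf: "\<And>y. y \<in> {0<..<L} \<Longrightarrow> (Tf' has_real_derivative Tf'' y) (at y)"
    and ddTs: "\<And>y. y \<in> {0<..<L} \<Longrightarrow> (Ts' has_real_derivative Ts'' y) (at y)"
    and eqf: "\<And>y. y \<in> {0<..<L} \<Longrightarrow>
               - \<phi> * \<kappa>f * Tf'' y + cpf * (mc / Ac) * Tf' y = hv * (Ts y - Tf y)"
    and eqs: "\<And>y. y \<in> {0<..<L} \<Longrightarrow>
               (1 - \<phi>) * \<kappa>s * Ts'' y = hv * (Ts y - Tf y)"
    and bc0: "Tf 0 = Tb" "Ts 0 = Tb"
    and bcLs: "(1 - \<phi>) * \<kappa>s * Ts' L = qHG - cpf * (mc / Ac) * (Ts L - Tf L)"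
    and bcLf: "Tf' L = (hv * Ac) / (cpf * mc) * (Ts L - Tf L)"
  shows "(\<forall>y \<in> {0..L}. Ts y \<ge> Tf y) \<and>
         ((\<forall>y \<in> {0..L}. Ts y = Tf y) \<longleftrightarrow> qHG / ((1 - \<phi>) * \<kappa>s) = 0)"
proof -
  define a where "a = \<phi> * \<kappa>f"
  define b where "b = (1 - \<phi>) * \<kappa>s"
  define c where "c = cpf * (mc / Ac)"
  have a: "0 < a" using phi pos unfolding a_def by simp
  have b: "0 < b" using phi pos unfolding b_def by simp
  have c: "0 < c" using pos unfolding c_def by simp
  have h: "0 < hv" using pos by simp
  have bcLf': "c * Tf' L = hv * (Ts L - Tf L)" using bcLf pos unfolding c_def by (simp add: field_simps)
  have P1: "\<forall>y \<in> {0..L}. Tf y \<le> Ts y"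
    by (rule core[OF a b c h q L dTf dTs cTf' cTs' ddTf ddTs])
       (use eqf eqs bc0 bcLs bcLf' in \<open>auto simp: a_def b_def c_def\<close>)
  have P2: "(\<forall>y \<in> {0..L}. Ts y = Tf y) \<longleftrightarrow> qHG = 0"
  proof
    assume z: "\<forall>y \<in> {0..L}. Ts y = Tf y"
    define th where "th y = Ts y - Tf y" for y
    define v where "v y = Ts' y - Tf' y" for y
    have dth: "DERIV th y :> v y" if "0 < y" "y < L" for y
    proof -
      have "(th has_real_derivative v y) (at y within {0..L})"
        unfolding th_def v_def using that by (intro derivative_intros dTs dTf) auto
      thus ?thesis using that by (simp add: at_within_Icc_at)
    qed
    have dth2: "DERIV (\<lambda>y. - th y) y :> - v y" if "0 < y" "y < L" for y
      using dth[OF that] by (intro derivative_intros)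
    have cth: "continuous_on {0..L} th"
      unfolding th_def by (intro continuous_intros DERIV_continuous_on[OF dTs] DERIV_continuous_on[OF dTf])
    have cv: "continuous_on {0..L} v"
      unfolding v_def by (intro continuous_intros cTs' cTf')
    have th0: "th y = 0" if "y \<in> {0..L}" for y using z that unfolding th_def by auto
    have "v L \<le> 0" by (rule endpt[OF L cth dth cv]) (use th0 L in auto)
    moreover have "- v L \<le> 0"
      by (rule endpt[OF L _ dth2]) (use th0 L cth cv in \<open>auto intro: continuous_intros\<close>)
    ultimately have vL: "v L = 0" by simp
    have "Tf' L = 0" using bcLf z L by auto
    hence "Ts' L = 0" using vL unfolding v_def by simp
    thus "qHG = 0" using bcLs z L by auto
  next
    assume q0: "qHG = 0"
    have "\<forall>y \<in> {0..L}. - Tf y \<le> - Ts y"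
    proof (rule core[OF a b c h order_refl L, where Tf' = "\<lambda>y. - Tf' y" and Ts' = "\<lambda>y. - Ts' y"
          and Tf'' = "\<lambda>y. - Tf'' y" and Ts'' = "\<lambda>y. - Ts'' y"])
      show "((\<lambda>y. - Tf y) has_real_derivative - Tf' y) (at y within {0..L})" if "y \<in> {0..L}" for y
        using dTf[OF that] by (intro derivative_intros)
      show "((\<lambda>y. - Ts y) has_real_derivative - Ts' y) (at y within {0..L})" if "y \<in> {0..L}" for y
        using dTs[OF that] by (intro derivative_intros)
      show "continuous_on {0..L} (\<lambda>y. - Tf' y)" using cTf' by (intro continuous_intros)
      show "continuous_on {0..L} (\<lambda>y. - Ts' y)" using cTs' by (intro continuous_intros)
      show "((\<lambda>y. - Tf' y) has_real_derivative - Tf'' y) (at y)" if "y \<in> {0<..<L}" for y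
        using ddTf[OF that] by (intro derivative_intros)
      show "((\<lambda>y. - Ts' y) has_real_derivative - Ts'' y) (at y)" if "y \<in> {0<..<L}" for y
        using ddTs[OF that] by (intro derivative_intros)
      show "- a * - Tf'' y + c * - Tf' y = hv * (- Ts y - - Tf y)" if "y \<in> {0<..<L}" for y
        using eqf[OF that] unfolding a_def c_def by (simp add: algebra_simps)
      show "b * - Ts'' y = hv * (- Ts y - - Tf y)" if "y \<in> {0<..<L}" for y
        using eqs[OF that] unfolding b_def by (simp add: algebra_simps)
      show "- Tf 0 = - Ts 0" using bc0 by simp
      show "b * - Ts' L = 0 - c * (- Ts L - - Tf L)"
      proof -
        have e: "b * Ts' L = 0 - c * (Ts L - Tf L)" using bcLs q0 unfolding b_def c_def by simp
        show ?thesis using e by (simp add: algebra_simps)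
      qed
      show "c * - Tf' L = hv * (- Ts L - - Tf L)" using bcLf' by (simp add: algebra_simps)
    qed
    thus "\<forall>y \<in> {0..L}. Ts y = Tf y" using P1 by force
  qed
  have "qHG / ((1 - \<phi>) * \<kappa>s) = 0 \<longleftrightarrow> qHG = 0" using phi pos by simp
  with P1 P2 show ?thesis by auto
qed

end
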